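(* In the setting of the addition algorithm, for every $\varphi\in\mathbb{R}^V$ with $M(\varphi)\le L(\tau,\varepsilon)$, $$\sqrt{J^+(\varphi)J^-(\varphi)}\ge\exp\Big(-\frac{1}{\varepsilon^2}\sum_{v\in V}\tau'\big(v,1+\max_{w\sim v}r(\varphi,w)\big)^2\Big).$$
   Context: Addition algorithm. Let $G=(V,E)$ be a finite connected graph ($v\sim w$ means $(v,w)\in E$), $\tau:V\to[0,\infty)$, $0<\varepsilon\le1/2$, and fix a total order $\preceq$ on $V$. Let $f:\mathbb{R}\to\mathbb{R}$ be $f(x)=0$ for $|x|\ge1$, $f(x)=(1+x)/\varepsilon$ on $[-1,-1+\varepsilon]$, $f(x)=1$ on $[-1+\varepsilon,1-\varepsilon]$, $f(x)=(1-x)/\varepsilon$ on $[1-\varepsilon,1]$. For $v\in V$, $h,t\in\mathbb{R}$ let $m_{v,h,t}(h')=\min(\tau(v)-t,\varepsilon/2)f(h'-h)+t$ if $\tau(v)\ge t$, and $m_{v,h,t}(h')=t$ if $\tau(v)<t$. On input $\varphi\in\mathbb{R}^V$ the algorithm outputs an ordering $P_1,\dots,P_{|V|}$ of $V$, numbers $s_k$ and functions $\tau_k:V\times\mathbb{R}\to\mathbb{R}$: set $\tau_1(v,h)=\tau(v)$; for $k=1,\dots,|V|$: let $P_k$ be the vertex $v\in V\setminus\{P_1,\dots,P_{k-1}\}$ minimizing $\tau_k(v,\varphi_v)$ (ties broken by taking the $\preceq$-smallest); set $s_k=\tau_k(P_k,\varphi_{P_k})$; if $k<|V|$ set $\tau_{k+1}(v,h)=\tau_k(v,h)$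 if $v\in\{P_1,\dots,P_k\}$ or $v\not\sim P_k$, and $\tau_{k+1}(v,h)=\min(\tau_k(v,h),m_{v,\varphi_{P_k},s_k}(h))$ otherwise. Define $T^+(\varphi)_{P_k}=\varphi_{P_k}+s_k$ ($1\le k\le|V|$) and $T^-(\varphi)=2\varphi-T^+(\varphi)$. Each $\tau_k(v,\cdot)$ is right-differentiable with Lipschitz constant at most $1/2$; $\partial_2\tau_k$ denotes the right derivative in the second variable. $J^+(\varphi):=\prod_{k=1}^{|V|}(1+\partial_2\tau_k(P_k,\varphi_{P_k}))$, $J^-(\varphi):=\prod_{k=1}^{|V|}(1-\partial_2\tau_k(P_k,\varphi_{P_k}))$. $d_G$ is graph distance; $\tau'(v,k):=\max\{\tau(v)-\tau(w):d_G(v,w)\le k\}$; $L(\tau,\varepsilon):=\sup\{k\ge0:\tau'(v,k)\le\varepsilon/2\ \forall v\}-1$ (possibly $+\infty$). $\mathcal{E}(\varphi):=\{(v,w)\in E:|\varphi_v-\varphi_w|\ge1-\varepsilon\}$; $v\leftrightarrow w$ if connected by edges of $\mathcal{E}(\varphi)$ (including $v=w$); $r(\varphi,v):=\max\{d_G(v,w):v\leftrightarrow w\}$, $M(\varphi):=\max\{d_G(v,w):v\leftrightarrow w\}$. *)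

theory Defs
  imports "HOL-Analysis.Analysis" "HOL-Library.Extended_Real"
begin

text \<open>Graph: finite vertex set V, symmetric edge relation E (v \<sim> w iff E v w).
  The fixed total order on V is the order of the linorder type of vertices.\<close>

definition edge_rel :: "'v set \<Rightarrow> ('v \<Rightarrow> 'v \<Rightarrow> bool) \<Rightarrow> ('v \<times> 'v) set" where
  "edge_rel V E = {(a, b). a \<in> V \<and> b \<in> V \<and> E a b}"

definition gdist :: "'v set \<Rightarrow> ('v \<Rightarrow> 'v \<Rightarrow> bool) \<Rightarrow> 'v \<Rightarrow> 'v \<Rightarrow> nat" where
  "gdist V E v w = (LEAST n. (v, w) \<in> (edge_rel V E) ^^ n)"

definition is_graph :: "'v set \<Rightarrow> ('v \<Rightarrow> 'v \<Rightarrow> bool) \<Rightarrow> bool" where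
  "is_graph V E \<longleftrightarrow> finite V \<and> V \<noteq> {} \<and>
     (\<forall>a b. E a b \<longrightarrow> a \<in> V \<and> b \<in> V) \<and> (\<forall>a b. E a b \<longrightarrow> E b a) \<and> (\<forall>a. \<not> E a a)"

definition connected_graph :: "'v set \<Rightarrow> ('v \<Rightarrow> 'v \<Rightarrow> bool) \<Rightarrow> bool" where
  "connected_graph V E \<longleftrightarrow> (\<forall>v\<in>V. \<forall>w\<in>V. (v, w) \<in> (edge_rel V E)\<^sup>*)"

definition fcut :: "real \<Rightarrow> real \<Rightarrow> real" where
  "fcut eps x = (if \<bar>x\<bar> \<ge> 1 then 0
     else if x \<le> -1 + eps then (1 + x) / eps
     else if x \<le> 1 - eps then 1
     else (1 - x) / eps)"

definition mfun :: "('v \<Rightarrow> real) \<Rightarrow> real \<Rightarrow> 'v \<Rightarrow> real \<Rightarrow> real \<Rightarrow> real \<Rightarrow> real" where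
  "mfun \<tau> eps v h t h' = (if \<tau> v \<ge> t then min (\<tau> v - t) (eps / 2) * fcut eps (h' - h) + t else t)"

text \<open>State of the addition algorithm after n steps:
  (list [P_1,...,P_n], list [s_1,...,s_n], list [tau_1,...,tau_{n+1}]).\<close>
primrec addalg :: "'v::linorder set \<Rightarrow> ('v \<Rightarrow> 'v \<Rightarrow> bool) \<Rightarrow> ('v \<Rightarrow> real) \<Rightarrow> real \<Rightarrow> ('v \<Rightarrow> real)
     \<Rightarrow> nat \<Rightarrow> 'v list \<times> real list \<times> ('v \<Rightarrow> real \<Rightarrow> real) list" where
  "addalg V E \<tau> eps \<phi> 0 = ([], [], [\<lambda>v h. \<tau> v])"
| "addalg V E \<tau> eps \<phi> (Suc n) =
     (let (Ps, ss, ts) = addalg V E \<tau> eps \<phi> n;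
          tk = last ts;
          R = V - set Ps;
          p = (LEAST v. v \<in> R \<and> (\<forall>w\<in>R. tk v (\<phi> v) \<le> tk w (\<phi> w)));
          s = tk p (\<phi> p);
          tnew = (\<lambda>v h. if v \<in> set (Ps @ [p]) \<or> \<not> E v p then tk v h
                        else min (tk v h) (mfun \<tau> eps v (\<phi> p) s h))
      in (Ps @ [p], ss @ [s], ts @ [tnew]))"

definition alg_P :: "'v::linorder set \<Rightarrow> ('v \<Rightarrow> 'v \<Rightarrow> bool) \<Rightarrow> ('v \<Rightarrow> real) \<Rightarrow> real \<Rightarrow> ('v \<Rightarrow> real) \<Rightarrow> nat \<Rightarrow> 'v" where
  "alg_P V E \<tau> eps \<phi> k = fst (addalg V E \<tau> eps \<phi> (card V)) ! (k - 1)"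

definition alg_tau :: "'v::linorder set \<Rightarrow> ('v \<Rightarrow> 'v \<Rightarrow> bool) \<Rightarrow> ('v \<Rightarrow> real) \<Rightarrow> real \<Rightarrow> ('v \<Rightarrow> real) \<Rightarrow> nat \<Rightarrow> 'v \<Rightarrow> real \<Rightarrow> real" where
  "alg_tau V E \<tau> eps \<phi> k = snd (snd (addalg V E \<tau> eps \<phi> (card V))) ! (k - 1)"

definition rderiv :: "(real \<Rightarrow> real) \<Rightarrow> real \<Rightarrow> real" where
  "rderiv g h = Lim (at_right 0) (\<lambda>t. (g (h + t) - g h) / t)"

definition Jplus :: "'v::linorder set \<Rightarrow> ('v \<Rightarrow> 'v \<Rightarrow> bool) \<Rightarrow> ('v \<Rightarrow> real) \<Rightarrow> real \<Rightarrow> ('v \<Rightarrow> real) \<Rightarrow> real" where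
  "Jplus V E \<tau> eps \<phi> = (\<Prod>k=1..card V.
     1 + rderiv (alg_tau V E \<tau> eps \<phi> k (alg_P V E \<tau> eps \<phi> k)) (\<phi> (alg_P V E \<tau> eps \<phi> k)))"

definition Jminus :: "'v::linorder set \<Rightarrow> ('v \<Rightarrow> 'v \<Rightarrow> bool) \<Rightarrow> ('v \<Rightarrow> real) \<Rightarrow> real \<Rightarrow> ('v \<Rightarrow> real) \<Rightarrow> real" where
  "Jminus V E \<tau> eps \<phi> = (\<Prod>k=1..card V.
     1 - rderiv (alg_tau V E \<tau> eps \<phi> k (alg_P V E \<tau> eps \<phi> k)) (\<phi> (alg_P V E \<tau> eps \<phi> k)))"

definition tau' :: "'v set \<Rightarrow> ('v \<Rightarrow> 'v \<Rightarrow> bool) \<Rightarrow> ('v \<Rightarrow> real) \<Rightarrow> 'v \<Rightarrow> nat \<Rightarrow> real" where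
  "tau' V E \<tau> v k = Max {\<tau> v - \<tau> w | w. w \<in> V \<and> gdist V E v w \<le> k}"

definition Lcap :: "'v set \<Rightarrow> ('v \<Rightarrow> 'v \<Rightarrow> bool) \<Rightarrow> ('v \<Rightarrow> real) \<Rightarrow> real \<Rightarrow> ereal" where
  "Lcap V E \<tau> eps = (SUP k \<in> {k::nat. \<forall>v\<in>V. tau' V E \<tau> v k \<le> eps / 2}. ereal (real k)) - 1"

definition crit_rel :: "'v set \<Rightarrow> ('v \<Rightarrow> 'v \<Rightarrow> bool) \<Rightarrow> real \<Rightarrow> ('v \<Rightarrow> real) \<Rightarrow> ('v \<times> 'v) set" where
  "crit_rel V E eps \<phi> = {(a, b). a \<in> V \<and> b \<in> V \<and> E a b \<and> \<bar>\<phi> a - \<phi> b\<bar> \<ge> 1 - eps}"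

definition conn :: "'v set \<Rightarrow> ('v \<Rightarrow> 'v \<Rightarrow> bool) \<Rightarrow> real \<Rightarrow> ('v \<Rightarrow> real) \<Rightarrow> 'v \<Rightarrow> 'v \<Rightarrow> bool" where
  "conn V E eps \<phi> v w \<longleftrightarrow> (v, w) \<in> (crit_rel V E eps \<phi>)\<^sup>*"

definition rrad :: "'v set \<Rightarrow> ('v \<Rightarrow> 'v \<Rightarrow> bool) \<Rightarrow> real \<Rightarrow> ('v \<Rightarrow> real) \<Rightarrow> 'v \<Rightarrow> nat" where
  "rrad V E eps \<phi> v = Max {gdist V E v w | w. w \<in> V \<and> conn V E eps \<phi> v w}"

definition Mrad :: "'v set \<Rightarrow> ('v \<Rightarrow> 'v \<Rightarrow> bool) \<Rightarrow> real \<Rightarrow> ('v \<Rightarrow> real) \<Rightarrow> nat" where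
  "Mrad V E eps \<phi> = Max {gdist V E v w | v w. v \<in> V \<and> w \<in> V \<and> conn V E eps \<phi> v w}"

text \<open>max over neighbours w of v of r(phi,w); 0 if v has no neighbours (only possible if |V| = 1).\<close>
definition maxnbr_r :: "'v set \<Rightarrow> ('v \<Rightarrow> 'v \<Rightarrow> bool) \<Rightarrow> real \<Rightarrow> ('v \<Rightarrow> real) \<Rightarrow> 'v \<Rightarrow> nat" where
  "maxnbr_r V E eps \<phi> v = Max (insert 0 {rrad V E eps \<phi> w | w. w \<in> V \<and> E v w})"

end

theory Submission
  imports Defs
begin

definition rq :: "(real \<Rightarrow> real) \<Rightarrow> real \<Rightarrow> real \<Rightarrow> real" where
  "rq g h t = (g (h + t) - g h) / t"

definition fd :: "real \<Rightarrow> real \<Rightarrow> real" where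
  "fd eps x = (if x < -1 then 0 else if x < -1 + eps then 1/eps else if x < 1 - eps then 0
     else if x < 1 then -1/eps else 0)"

lemma ev_delta:
  assumes "\<exists>\<delta>>0. \<forall>t. 0 < t \<and> t < \<delta> \<longrightarrow> f t = (c::real)"
  shows "(f \<longlongrightarrow> c) (at_right (0::real))"
proof -
  obtain \<delta> where d: "\<delta> > 0" "\<forall>t. 0 < t \<and> t < \<delta> \<longrightarrow> f t = c" using assms by blast
  have "eventually (\<lambda>t. f t = c) (at_right 0)"
    using eventually_at_right_real[OF d(1)] d(2) by (auto elim: eventually_mono)
  thus ?thesis by (rule tendsto_eventually)
qed

lemma fcut_rd:
  assumes e: "0 < eps" "eps \<le> 1/2"
  shows "(rq (fcut eps) x \<longlongrightarrow> fd eps x) (at_right 0)"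
proof (rule ev_delta)
  show "\<exists>\<delta>>0. \<forall>t. 0 < t \<and> t < \<delta> \<longrightarrow> rq (fcut eps) x t = fd eps x"
  proof (cases "x < -1")
    case True show ?thesis apply (rule exI[of _ "-1-x"]) using True e by (auto simp: rq_def fcut_def fd_def)
  next
    case F1: False show ?thesis
    proof (cases "x < -1 + eps")
      case True show ?thesis apply (rule exI[of _ "-1+eps-x"]) using F1 True e
        by (auto simp: rq_def fcut_def fd_def field_simps)
    next
      case F2: False show ?thesis
      proof (cases "x < 1 - eps")
        case True show ?thesis apply (rule exI[of _ "1-eps-x"]) using F1 F2 True e
          by (auto simp: rq_def fcut_def fd_def field_simps)
      next
        case F3: False show ?thesis
        proof (cases "x < 1")
          case True show ?thesis apply (rule exI[of _ "1-x"]) using F1 F2 F3 True e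
            by (auto simp: rq_def fcut_def fd_def field_simps) (metis distrib_left mult.right_neutral)
        next
          case False show ?thesis apply (rule exI[of _ 1]) using F1 F2 F3 False e
            by (auto simp: rq_def fcut_def fd_def field_simps)
        qed
      qed
    qed
  qed
qed

lemma mfun_rd:
  assumes e: "0 < eps" "eps \<le> 1/2"
  shows "(rq (mfun \<tau> eps v a s) h \<longlongrightarrow>
     (if s \<le> \<tau> v then min (\<tau> v - s) (eps/2) * fd eps (h - a) else 0)) (at_right 0)"
proof (cases "s \<le> \<tau> v")
  case True
  have eq: "rq (mfun \<tau> eps v a s) h = (\<lambda>t. min (\<tau> v - s) (eps/2) * rq (fcut eps) (h - a) t)"
    using True by (auto simp: rq_def mfun_def algebra_simps diff_divide_distrib fun_eq_iff)
  show ?thesis unfolding eq using True by (auto intro!: tendsto_mult_left fcut_rd e)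
next
  case False
  have eq: "rq (mfun \<tau> eps v a s) h = (\<lambda>t. 0)"
    using False by (auto simp: rq_def mfun_def fun_eq_iff)
  show ?thesis unfolding eq using False by auto
qed

lemma rq_cont:
  assumes "(rq g h \<longlongrightarrow> d) (at_right 0)"
  shows "((\<lambda>t. g (h + t)) \<longlongrightarrow> g h) (at_right 0)"
proof -
  have "((\<lambda>t. g h + t * rq g h t) \<longlongrightarrow> g h + 0 * d) (at_right 0)"
    by (intro tendsto_intros assms)
  moreover have "eventually (\<lambda>t. g h + t * rq g h t = g (h + t)) (at_right 0)"
    using eventually_at_right_less[of "0::real"] by (auto elim!: eventually_mono simp: rq_def)
  ultimately show ?thesis by (auto intro: Lim_transform_eventually)
qed

lemma min_rd:
  assumes a1: "(rq g1 h \<longlongrightarrow> d1) (at_right 0)" and a2: "(rq g2 h \<longlongrightarrow> d2) (at_right 0)"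
  shows "\<exists>d. (rq (\<lambda>x. min (g1 x) (g2 x)) h \<longlongrightarrow> d) (at_right 0) \<and> (d = d1 \<or> d = d2)"
proof -
  have c: "((\<lambda>t. g2 (h + t) - g1 (h + t)) \<longlongrightarrow> g2 h - g1 h) (at_right 0)"
    by (intro tendsto_intros rq_cont[OF a1] rq_cont[OF a2])
  consider "g1 h < g2 h" | "g2 h < g1 h" | "g1 h = g2 h" by linarith
  then show ?thesis
  proof cases
    case 1
    have "eventually (\<lambda>t. g2 (h + t) - g1 (h + t) > 0) (at_right 0)"
      using order_tendstoD(1)[OF c, of 0] 1 by auto
    hence "eventually (\<lambda>t. rq g1 h t = rq (\<lambda>x. min (g1 x) (g2 x)) h t) (at_right 0)"
      by (auto elim!: eventually_mono simp: rq_def 1 min_def less_imp_le)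
    thus ?thesis using a1 by (auto intro: Lim_transform_eventually)
  next
    case 2
    have "eventually (\<lambda>t. g2 (h + t) - g1 (h + t) < 0) (at_right 0)"
      using order_tendstoD(2)[OF c, of 0] 2 by auto
    hence "eventually (\<lambda>t. rq g2 h t = rq (\<lambda>x. min (g1 x) (g2 x)) h t) (at_right 0)"
      using 2 by (auto elim!: eventually_mono simp: rq_def min_def)
    thus ?thesis using a2 by (auto intro: Lim_transform_eventually)
  next
    case 3
    have "((\<lambda>t. min (rq g1 h t) (rq g2 h t)) \<longlongrightarrow> min d1 d2) (at_right 0)"
      by (intro tendsto_min a1 a2)
    moreover have "eventually (\<lambda>t. min (rq g1 h t) (rq g2 h t) = rq (\<lambda>x. min (g1 x) (g2 x)) h t) (at_right 0)"
    proof -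
      have "min (rq g1 h t) (rq g2 h t) = rq (\<lambda>x. min (g1 x) (g2 x)) h t" if "t > 0" for t
      proof (cases "g1 (h+t) \<le> g2 (h+t)")
        case True
        hence "rq g1 h t \<le> rq g2 h t" using 3 that by (auto simp: rq_def divide_right_mono)
        thus ?thesis using True 3 by (simp add: rq_def min_def)
      next
        case False
        hence "rq g2 h t \<le> rq g1 h t" using 3 that by (auto simp: rq_def divide_right_mono)
        thus ?thesis using False 3 by (auto simp: rq_def min_def)
      qed
      thus ?thesis using eventually_at_right_less[of "0::real"] by (auto elim!: eventually_mono)
    qed
    ultimately have "(rq (\<lambda>x. min (g1 x) (g2 x)) h \<longlongrightarrow> min d1 d2) (at_right 0)"
      by (rule Lim_transform_eventually)
    thus ?thesis by (metis min_def)
  qed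
qed

definition Good :: "'v list \<Rightarrow> real list \<Rightarrow> ('v \<Rightarrow> real) \<Rightarrow> real \<Rightarrow> ('v \<Rightarrow> 'v \<Rightarrow> bool) \<Rightarrow> 'v \<Rightarrow> real \<Rightarrow> bool" where
  "Good Ps ss \<tau> eps E v d \<longleftrightarrow> \<bar>d\<bar> \<le> 1/2 \<and>
     (d = 0 \<or> (\<exists>j<length Ps. E v (Ps!j) \<and> ss!j \<le> \<tau> v \<and> \<bar>d\<bar> \<le> (\<tau> v - ss!j)/eps))"

lemma Good_app:
  assumes "Good Ps ss \<tau> eps E v d" "length ss = length Ps"
  shows "Good (Ps @ [p]) (ss @ [s]) \<tau> eps E v d"
  using assms unfolding Good_def by (auto simp: nth_append)

lemma fd_bound: "0 < eps \<Longrightarrow> \<bar>fd eps x\<bar> \<le> 1/eps"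
  by (auto simp: fd_def)

lemma mfun_Good:
  assumes e: "0 < eps" "eps \<le> 1/2" and Ep: "E v p" and l: "length ss = length Ps"
  shows "\<exists>d. (rq (mfun \<tau> eps v a s) h \<longlongrightarrow> d) (at_right 0) \<and> Good (Ps @ [p]) (ss @ [s]) \<tau> eps E v d"
proof -
  let ?d = "(if s \<le> \<tau> v then min (\<tau> v - s) (eps/2) * fd eps (h - a) else 0)"
  have "Good (Ps @ [p]) (ss @ [s]) \<tau> eps E v ?d"
  proof (cases "s \<le> \<tau> v")
    case True
    let ?c = "min (\<tau> v - s) (eps/2)"
    have c0: "0 \<le> ?c" using True e by auto
    have "\<bar>?c * fd eps (h - a)\<bar> \<le> ?c * (1/eps)"
      proof -
      have "\<bar>?c * fd eps (h - a)\<bar> = ?c * \<bar>fd eps (h - a)\<bar>" using c0 by (simp add: abs_mult)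
      also have "\<dots> \<le> ?c * (1/eps)" using fd_bound[OF e(1), of "h-a"] c0 by (rule mult_left_mono)
      finally show ?thesis .
    qed
    moreover have "?c * (1/eps) \<le> 1/2" using e by (auto simp: min_def field_simps)
    moreover have "?c * (1/eps) \<le> (\<tau> v - s)/eps" using e by (auto simp: min_def field_simps)
    ultimately have A: "\<bar>?c * fd eps (h - a)\<bar> \<le> 1/2" "\<bar>?c * fd eps (h - a)\<bar> \<le> (\<tau> v - s)/eps"
      by linarith+
    show ?thesis using True Ep l A unfolding Good_def
      by (auto intro!: exI[of _ "length Ps"] simp: nth_append)
  qed (simp add: Good_def)
  thus ?thesis using mfun_rd[OF e, of \<tau> v a s h] by blast
qed

lemma rderiv_eq: "(rq g h \<longlongrightarrow> d) (at_right 0) \<Longrightarrow> rderiv g h = d"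
proof -
  assume a: "(rq g h \<longlongrightarrow> d) (at_right 0)"
  have "(\<lambda>t. (g (h + t) - g h) / t) = rq g h" by (auto simp: rq_def fun_eq_iff)
  thus ?thesis unfolding rderiv_def using a by (simp add: tendsto_Lim)
qed

context
  fixes V :: "'v::linorder set" and E :: "'v \<Rightarrow> 'v \<Rightarrow> bool"
    and \<tau> :: "'v \<Rightarrow> real" and eps :: real and \<phi> :: "'v \<Rightarrow> real"
  assumes G: "is_graph V E" and C: "connected_graph V E"
begin

lemma finV: "finite V" using G by (simp add: is_graph_def)
lemma EV: "E a b \<Longrightarrow> a \<in> V \<and> b \<in> V" using G by (simp add: is_graph_def)

lemma path_ex: "p \<in> V \<Longrightarrow> u \<in> V \<Longrightarrow> \<exists>n. (p, u) \<in> edge_rel V E ^^ n"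
  using C unfolding connected_graph_def by (auto intro: rtrancl_imp_relpow)

lemma gdist_path: "p \<in> V \<Longrightarrow> u \<in> V \<Longrightarrow> (p, u) \<in> edge_rel V E ^^ gdist V E p u"
  unfolding gdist_def using path_ex by (metis LeastI_ex)

lemma gdist_refl: "gdist V E v v = 0"
  unfolding gdist_def by (rule Least_eq_0) simp

lemma gdist_step:
  assumes "E v p" "u \<in> V"
  shows "gdist V E v u \<le> Suc (gdist V E p u)"
proof -
  have vp: "(v, p) \<in> edge_rel V E" using assms EV by (auto simp: edge_rel_def)
  have "(v, u) \<in> edge_rel V E ^^ Suc (gdist V E p u)"
    using relpow_Suc_I2[OF vp gdist_path] EV assms by blast
  thus ?thesis unfolding gdist_def by (rule Least_le)
qed

lemma gdist_le_rrad:
  assumes "p \<in> V" "u \<in> V" "conn V E eps \<phi> p u"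
  shows "gdist V E p u \<le> rrad V E eps \<phi> p"
proof -
  have "finite {gdist V E p w | w. w \<in> V \<and> conn V E eps \<phi> p w}"
    using finV by (auto intro: finite_subset[of _ "(\<lambda>w. gdist V E p w) ` V"])
  thus ?thesis unfolding rrad_def using assms by (auto intro: Max_ge)
qed

lemma gdist_le_Mrad:
  assumes "p \<in> V" "u \<in> V" "conn V E eps \<phi> p u"
  shows "gdist V E p u \<le> Mrad V E eps \<phi>"
proof -
  have "finite {gdist V E v w | v w. v \<in> V \<and> w \<in> V \<and> conn V E eps \<phi> v w}"
    using finV by (auto intro: finite_subset[of _ "(\<lambda>(v,w). gdist V E v w) ` (V \<times> V)"])
  thus ?thesis unfolding Mrad_def using assms by (auto intro: Max_ge)
qed

lemma rrad_le_maxnbr: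
  assumes "E v p"
  shows "rrad V E eps \<phi> p \<le> maxnbr_r V E eps \<phi> v"
proof -
  have "finite {rrad V E eps \<phi> w | w. w \<in> V \<and> E v w}"
    using finV by (auto intro: finite_subset[of _ "(\<lambda>w. rrad V E eps \<phi> w) ` V"])
  thus ?thesis unfolding maxnbr_r_def using assms EV by (auto intro: Max_ge)
qed

lemma tau'_ge:
  assumes "v \<in> V" "w \<in> V" "gdist V E v w \<le> k"
  shows "\<tau> v - \<tau> w \<le> tau' V E \<tau> v k"
proof -
  have "finite {\<tau> v - \<tau> w | w. w \<in> V \<and> gdist V E v w \<le> k}"
    using finV by (auto intro: finite_subset[of _ "(\<lambda>w. \<tau> v - \<tau> w) ` V"])
  thus ?thesis unfolding tau'_def using assms by (auto intro: Max_ge)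
qed

lemma tau'_nonneg: "v \<in> V \<Longrightarrow> 0 \<le> tau' V E \<tau> v k"
  using tau'_ge[of v v k] gdist_refl by simp

lemma conn_step:
  assumes "E v p" "1 - eps \<le> \<bar>\<phi> v - \<phi> p\<bar>" "conn V E eps \<phi> p u"
  shows "conn V E eps \<phi> v u"
proof -
  have "(v, p) \<in> crit_rel V E eps \<phi>" using assms EV by (auto simp: crit_rel_def)
  thus ?thesis using assms(3) unfolding conn_def by (rule converse_rtrancl_into_rtrancl)
qed

lemma conn_refl: "conn V E eps \<phi> v v" by (simp add: conn_def)

lemma d_bound:
  assumes e: "0 < eps" and v: "v \<in> V" and Gd: "Good Ps ss \<tau> eps E v d"
    and I3: "\<forall>j<length Ps. \<exists>u\<in>V. conn V E eps \<phi> (Ps!j) u \<and> \<tau> u \<le> ss!j"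
  shows "d\<^sup>2 \<le> (tau' V E \<tau> v (1 + maxnbr_r V E eps \<phi> v))\<^sup>2 / eps\<^sup>2"
proof (cases "d = 0")
  case True thus ?thesis by simp
next
  case False
  then obtain j where j: "j < length Ps" "E v (Ps!j)" "ss!j \<le> \<tau> v" "\<bar>d\<bar> \<le> (\<tau> v - ss!j)/eps"
    using Gd unfolding Good_def by auto
  obtain u where u: "u \<in> V" "conn V E eps \<phi> (Ps!j) u" "\<tau> u \<le> ss!j" using I3 j(1) by blast
  have pV: "Ps!j \<in> V" using EV j(2) by blast
  have "gdist V E v u \<le> 1 + maxnbr_r V E eps \<phi> v"
    using gdist_step[OF j(2) u(1)] gdist_le_rrad[OF pV u(1) u(2)] rrad_le_maxnbr[OF j(2)] by linarith
  hence T: "\<tau> v - \<tau> u \<le> tau' V E \<tau> v (1 + maxnbr_r V E eps \<phi> v)" using tau'_ge v u(1) by blast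
  have "\<bar>d\<bar> \<le> tau' V E \<tau> v (1 + maxnbr_r V E eps \<phi> v) / eps"
    using j(4) T u(3) e by (smt (verit) divide_right_mono)
  hence "\<bar>d\<bar>\<^sup>2 \<le> (tau' V E \<tau> v (1 + maxnbr_r V E eps \<phi> v) / eps)\<^sup>2"
    by (rule power_mono) simp
  thus ?thesis by (simp add: power_divide)
qed


lemma inv:
  assumes e: "0 < eps" "eps \<le> 1/2"
    and Lf: "\<And>v w. v \<in> V \<Longrightarrow> w \<in> V \<Longrightarrow> gdist V E v w \<le> Suc (Mrad V E eps \<phi>) \<Longrightarrow> \<tau> v - \<tau> w \<le> eps/2"
  shows "n \<le> card V \<Longrightarrow> addalg V E \<tau> eps \<phi> n = (Ps, ss, ts) \<Longrightarrow>
    length Ps = n \<and> length ss = n \<and> length ts = Suc n \<and> distinct Ps \<and> set Ps \<subseteq> V \<and>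
    (\<forall>j<n. \<exists>u\<in>V. conn V E eps \<phi> (Ps!j) u \<and> \<tau> u \<le> ss!j) \<and>
    (\<forall>v\<in>V. \<exists>u\<in>V. conn V E eps \<phi> v u \<and> \<tau> u \<le> last ts v (\<phi> v)) \<and>
    (\<forall>j<Suc n. \<forall>v\<in>V. \<forall>h. \<exists>d. (rq ((ts!j) v) h \<longlongrightarrow> d) (at_right 0) \<and> Good Ps ss \<tau> eps E v d)"
proof (induction n arbitrary: Ps ss ts)
  case 0
  hence eq: "Ps = []" "ss = []" "ts = [\<lambda>v h. \<tau> v]" by auto
  have "(rq (\<lambda>h. \<tau> v) h \<longlongrightarrow> 0) (at_right 0)" for v h
  proof -
    have "rq (\<lambda>h. \<tau> v) h = (\<lambda>t. 0)" by (simp add: rq_def fun_eq_iff)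
    thus ?thesis by simp
  qed
  moreover have "Good [] [] \<tau> eps E v 0" for v by (simp add: Good_def)
  ultimately show ?case unfolding eq using conn_refl by fastforce
next
  case (Suc n)
  obtain Ps0 ss0 ts0 where A: "addalg V E \<tau> eps \<phi> n = (Ps0, ss0, ts0)" by (metis prod.exhaust)
  have IH: "length Ps0 = n \<and> length ss0 = n \<and> length ts0 = Suc n \<and> distinct Ps0 \<and> set Ps0 \<subseteq> V \<and>
    (\<forall>j<n. \<exists>u\<in>V. conn V E eps \<phi> (Ps0!j) u \<and> \<tau> u \<le> ss0!j) \<and>
    (\<forall>v\<in>V. \<exists>u\<in>V. conn V E eps \<phi> v u \<and> \<tau> u \<le> last ts0 v (\<phi> v)) \<and>
    (\<forall>j<Suc n. \<forall>v\<in>V. \<forall>h. \<exists>d. (rq ((ts0!j) v) h \<longlongrightarrow> d) (at_right 0) \<and> Good Ps0 ss0 \<tau> eps E v d)"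
    using Suc.IH[OF _ A] Suc.prems by simp
  have lP: "length Ps0 = n" using IH by blast
  have lS: "length ss0 = n" using IH by blast
  have lT: "length ts0 = Suc n" using IH by blast
  have dP: "distinct Ps0" using IH by blast
  have sP: "set Ps0 \<subseteq> V" using IH by blast
  have I3o: "\<forall>j<n. \<exists>u\<in>V. conn V E eps \<phi> (Ps0!j) u \<and> \<tau> u \<le> ss0!j" using IH by blast
  have I5o: "\<forall>v\<in>V. \<exists>u\<in>V. conn V E eps \<phi> v u \<and> \<tau> u \<le> last ts0 v (\<phi> v)" using IH by blast
  have I4o: "\<forall>j<Suc n. \<forall>v\<in>V. \<forall>h. \<exists>d. (rq ((ts0!j) v) h \<longlongrightarrow> d) (at_right 0) \<and> Good Ps0 ss0 \<tau> eps E v d"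
    using IH by blast
  define tk where "tk = last ts0"
  define R where "R = V - set Ps0"
  define Q where "Q = (\<lambda>v. v \<in> R \<and> (\<forall>w\<in>R. tk v (\<phi> v) \<le> tk w (\<phi> w)))"
  define p where "p = (LEAST v. Q v)"
  define s where "s = tk p (\<phi> p)"
  define tnew where "tnew = (\<lambda>v h. if v \<in> set (Ps0 @ [p]) \<or> \<not> E v p then tk v h
                        else min (tk v h) (mfun \<tau> eps v (\<phi> p) s h))"
  have st: "addalg V E \<tau> eps \<phi> (Suc n) = (Ps0 @ [p], ss0 @ [s], ts0 @ [tnew])"
    unfolding tnew_def s_def p_def Q_def R_def tk_def by (simp only: addalg.simps A Let_def prod.case)
  hence eqs: "Ps = Ps0 @ [p]" "ss = ss0 @ [s]" "ts = ts0 @ [tnew]" using Suc.prems by auto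
  have finR: "finite R" using finV by (simp add: R_def)
  have cP: "card (set Ps0) = n" using lP dP distinct_card by metis
  have "R \<noteq> {}"
  proof
    assume "R = {}"
    hence "V \<subseteq> set Ps0" unfolding R_def by blast
    hence "card V \<le> n" using cP card_mono by (metis List.finite_set)
    thus False using Suc.prems(1) by simp
  qed
  hence "Min ((\<lambda>v. tk v (\<phi> v)) ` R) \<in> (\<lambda>v. tk v (\<phi> v)) ` R" using finR by (intro Min_in) auto
  then obtain v0 where v0: "v0 \<in> R" "tk v0 (\<phi> v0) = Min ((\<lambda>v. tk v (\<phi> v)) ` R)"
    by (metis (no_types, lifting) imageE)
  have "Q v0" unfolding Q_def using v0(1) by (simp add: v0(2) Min_le finR)
  hence ex: "\<exists>a. Q a" by blast
  have finQ: "finite {a. Q a}" by (rule finite_subset[OF _ finR]) (auto simp: Q_def)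
  have "p = Min {a. Q a}" unfolding p_def by (rule Least_Min[OF finQ ex])
  hence "p \<in> {a. Q a}" using finQ ex Min_in by (metis Collect_empty_eq)
  hence pR: "p \<in> R" by (simp add: Q_def)
  hence pV: "p \<in> V" and pn: "p \<notin> set Ps0" by (auto simp: R_def)
  obtain u0 where u0: "u0 \<in> V" "conn V E eps \<phi> p u0" "\<tau> u0 \<le> s"
    using I5o pV unfolding s_def tk_def by blast
  have I3: "\<forall>j<Suc n. \<exists>u\<in>V. conn V E eps \<phi> (Ps!j) u \<and> \<tau> u \<le> ss!j"
  proof (intro allI impI)
    fix j assume j: "j < Suc n"
    show "\<exists>u\<in>V. conn V E eps \<phi> (Ps!j) u \<and> \<tau> u \<le> ss!j"
    proof (cases "j < n")
      case True thus ?thesis using I3o lP lS unfolding eqs by (simp add: nth_append)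
    next
      case False hence "j = n" using j by simp
      thus ?thesis using u0 lP lS unfolding eqs by (auto simp: nth_append)
    qed
  qed
  have I5: "\<forall>v\<in>V. \<exists>u\<in>V. conn V E eps \<phi> v u \<and> \<tau> u \<le> last ts v (\<phi> v)"
  proof
    fix v assume vV: "v \<in> V"
    obtain u1 where u1: "u1 \<in> V" "conn V E eps \<phi> v u1" "\<tau> u1 \<le> tk v (\<phi> v)"
      using I5o vV unfolding tk_def by blast
    show "\<exists>u\<in>V. conn V E eps \<phi> v u \<and> \<tau> u \<le> last ts v (\<phi> v)"
    proof (cases "v \<in> set (Ps0 @ [p]) \<or> \<not> E v p")
      case True thus ?thesis using u1 unfolding eqs tnew_def by auto
    next
      case False
      hence Evp: "E v p" by simp
      have "\<exists>u\<in>V. conn V E eps \<phi> v u \<and> \<tau> u \<le> mfun \<tau> eps v (\<phi> p) s (\<phi> v)"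
      proof (cases "s \<le> \<tau> v")
        case False thus ?thesis using vV conn_refl[of v] by (auto simp: mfun_def intro!: bexI[of _ v])
      next
        case True
        let ?c = "min (\<tau> v - s) (eps / 2)"
        have f01: "0 \<le> fcut eps x" for x using e by (auto simp: fcut_def)
        have mge: "s \<le> mfun \<tau> eps v (\<phi> p) s (\<phi> v)"
          using True f01[of "\<phi> v - \<phi> p"] e by (auto simp: mfun_def)
        show ?thesis
        proof (cases "1 - eps \<le> \<bar>\<phi> v - \<phi> p\<bar>")
          case True
          hence "conn V E eps \<phi> v u0" using conn_step Evp u0(2) by blast
          thus ?thesis using u0 mge by (auto intro!: bexI[of _ u0])
        next
          case False
          hence "fcut eps (\<phi> v - \<phi> p) = 1" using e by (auto simp: fcut_def)
          hence meq: "mfun \<tau> eps v (\<phi> p) s (\<phi> v) = ?c + s" using True by (simp add: mfun_def)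
          have "gdist V E v u0 \<le> Suc (Mrad V E eps \<phi>)"
            using gdist_step[OF Evp u0(1)] gdist_le_Mrad[OF pV u0(1) u0(2)] by linarith
          hence "\<tau> v - \<tau> u0 \<le> eps/2" using Lf vV u0(1) by blast
          hence "\<tau> v \<le> ?c + s" using u0(3) by (auto simp: min_def)
          thus ?thesis using meq vV conn_refl[of v] by (auto intro!: bexI[of _ v])
        qed
      qed
      then obtain u where u: "u \<in> V" "conn V E eps \<phi> v u" "\<tau> u \<le> mfun \<tau> eps v (\<phi> p) s (\<phi> v)" by blast
      show ?thesis
      proof (cases "tk v (\<phi> v) \<le> mfun \<tau> eps v (\<phi> p) s (\<phi> v)")
        case True thus ?thesis using u1 False unfolding eqs tnew_def by auto
      next
        case F2: False thus ?thesis using u False unfolding eqs tnew_def by auto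
      qed
    qed
  qed
  have I4: "\<forall>j<Suc (Suc n). \<forall>v\<in>V. \<forall>h. \<exists>d. (rq ((ts!j) v) h \<longlongrightarrow> d) (at_right 0) \<and> Good Ps ss \<tau> eps E v d"
  proof (intro allI impI ballI)
    fix j v h assume j: "j < Suc (Suc n)" and vV: "v \<in> V"
    have lss: "length ss0 = length Ps0" using lP lS by simp
    have old: "\<exists>d. (rq ((ts0!j') v) h \<longlongrightarrow> d) (at_right 0) \<and> Good Ps ss \<tau> eps E v d" if "j' < Suc n" for j'
      using I4o that vV Good_app[OF _ lss] unfolding eqs by blast
    show "\<exists>d. (rq ((ts!j) v) h \<longlongrightarrow> d) (at_right 0) \<and> Good Ps ss \<tau> eps E v d"
    proof (cases "j < Suc n")
      case True thus ?thesis using old[OF True] lT unfolding eqs by (simp add: nth_append)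
    next
      case False
      hence jn: "ts!j = tnew" using j lT unfolding eqs by (simp add: nth_append)
      have lastn: "tk = ts0 ! n" unfolding tk_def using lT by (metis diff_Suc_1 last_conv_nth list.size(3) nat.distinct(1))
      obtain d1 where d1: "(rq (tk v) h \<longlongrightarrow> d1) (at_right 0)" "Good Ps ss \<tau> eps E v d1"
        using old[of n] lastn by auto
      show ?thesis
      proof (cases "v \<in> set (Ps0 @ [p]) \<or> \<not> E v p")
        case True
        hence "tnew v = tk v" unfolding tnew_def by auto
        thus ?thesis using d1 jn by auto
      next
        case False
        hence tv: "tnew v = (\<lambda>h. min (tk v h) (mfun \<tau> eps v (\<phi> p) s h))" unfolding tnew_def by auto
        obtain d2 where d2: "(rq (mfun \<tau> eps v (\<phi> p) s) h \<longlongrightarrow> d2) (at_right 0)" "Good Ps ss \<tau> eps E v d2"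
          using mfun_Good[OF e, of E v p ss0 Ps0 \<tau> "\<phi> p" s h] False lss unfolding eqs by auto
        obtain d where "(rq (tnew v) h \<longlongrightarrow> d) (at_right 0)" "d = d1 \<or> d = d2"
          using min_rd[OF d1(1) d2(1)] tv by auto
        thus ?thesis using d1 d2 jn by auto
      qed
    qed
  qed
  have "length Ps = Suc n" "length ss = Suc n" "length ts = Suc (Suc n)" "distinct Ps" "set Ps \<subseteq> V"
    using lP lS lT dP sP pV pn unfolding eqs by auto
  thus ?case using I3 I5 I4 by blast
qed

end


lemma exp_ineq:
  fixes x :: real assumes "0 \<le> x" "x \<le> 1/4"
  shows "exp (-2*x) \<le> 1 - x"
proof -
  have a: "1 + 2*x \<le> exp (2*x)" by (rule exp_ge_add_one_self)
  have b: "exp (-2*x) * exp (2*x) = 1" by (simp add: exp_add[symmetric])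
  have "0 \<le> x * (1 - 2*x)" using assms by (intro mult_nonneg_nonneg) auto
  hence c: "1 \<le> (1 - x) * (1 + 2*x)" by (simp add: algebra_simps)
  have "exp (-2*x) * (1 + 2*x) \<le> exp (-2*x) * exp (2*x)" using a by (simp add: mult_left_mono)
  hence "exp (-2*x) * (1 + 2*x) \<le> (1 - x) * (1 + 2*x)" using b c by linarith
  moreover have "0 < 1 + 2*x" using assms by simp
  ultimately show ?thesis by (rule mult_right_le_imp_le)
qed

lemma sum_nth_distinct:
  assumes "distinct Ps" "length Ps = N"
  shows "(\<Sum>k=1..N. f (Ps!(k-1))) = (\<Sum>v\<in>set Ps. (f v :: real))"
proof -
  have "(\<Sum>k=1..N. f (Ps!(k-1))) = (\<Sum>k<N. f (Ps!k))"
    using sum.atLeast1_atMost_eq[of "\<lambda>k. f (Ps!(k-1))" N] by simp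
  also have "\<dots> = sum_list (map f Ps)"
    using sum_list_sum_nth[of "map f Ps"] assms(2) by (simp add: atLeast0LessThan)
  also have "\<dots> = (\<Sum>v\<in>set Ps. f v)" using assms(1) by (rule sum_list_distinct_conv_sum_set)
  finally show ?thesis .
qed

theorem lemma2p7:
  fixes V :: "'v::linorder set" and E :: "'v \<Rightarrow> 'v \<Rightarrow> bool"
    and \<tau> :: "'v \<Rightarrow> real" and eps :: real and \<phi> :: "'v \<Rightarrow> real"
  assumes "is_graph V E" and "connected_graph V E"
    and "\<forall>v\<in>V. \<tau> v \<ge> 0"
    and "0 < eps" and "eps \<le> 1/2"
    and "ereal (real (Mrad V E eps \<phi>)) \<le> Lcap V E \<tau> eps"
  shows "sqrt (Jplus V E \<tau> eps \<phi> * Jminus V E \<tau> eps \<phi>)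
           \<ge> exp (- (1 / eps\<^sup>2) * (\<Sum>v\<in>V. (tau' V E \<tau> v (1 + maxnbr_r V E eps \<phi> v))\<^sup>2))"
proof -
  note G = assms(1) and C = assms(2) and e = assms(4,5)
  define m where "m = Mrad V E eps \<phi>"
  define K where "K = {k::nat. \<forall>v\<in>V. tau' V E \<tau> v k \<le> eps / 2}"
  have "\<exists>k\<in>K. Suc m \<le> k"
  proof (rule ccontr)
    assume "\<not> ?thesis"
    hence "\<forall>k\<in>K. k \<le> m" by auto
    hence "(SUP k\<in>K. ereal (real k)) \<le> ereal (real m)" by (intro SUP_least) auto
    hence "(SUP k\<in>K. ereal (real k)) - 1 \<le> ereal (real m - 1)"
      by (cases "(SUP k\<in>K. ereal (real k))") (auto simp: one_ereal_def)
    moreover have "ereal (real m) \<le> (SUP k\<in>K. ereal (real k)) - 1"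
      using assms(6) unfolding m_def K_def Lcap_def by simp
    ultimately have "ereal (real m) \<le> ereal (real m - 1)" by (rule order_trans[rotated])
    thus False by simp
  qed
  then obtain k where k: "k \<in> K" "Suc m \<le> k" by blast
  have Lf: "\<tau> v - \<tau> w \<le> eps/2" if "v \<in> V" "w \<in> V" "gdist V E v w \<le> Suc (Mrad V E eps \<phi>)" for v w
  proof -
    have "\<tau> v - \<tau> w \<le> tau' V E \<tau> v k" using tau'_ge[OF G C that(1,2)] that(3) k(2) m_def by simp
    thus ?thesis using k(1) that(1) unfolding K_def by force
  qed
  define N where "N = card V"
  obtain Ps ss ts where A: "addalg V E \<tau> eps \<phi> N = (Ps, ss, ts)" by (metis prod.exhaust)
  have I: "length Ps = N \<and> length ss = N \<and> length ts = Suc N \<and> distinct Ps \<and> set Ps \<subseteq> V \<and>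
    (\<forall>j<N. \<exists>u\<in>V. conn V E eps \<phi> (Ps!j) u \<and> \<tau> u \<le> ss!j) \<and>
    (\<forall>j<Suc N. \<forall>v\<in>V. \<forall>h. \<exists>d. (rq ((ts!j) v) h \<longlongrightarrow> d) (at_right 0) \<and> Good Ps ss \<tau> eps E v d)"
    using inv[OF G C e Lf _ A] by (simp add: N_def)
  have lP: "length Ps = N" and dP: "distinct Ps" and sP: "set Ps \<subseteq> V"
    and I3: "\<forall>j<length Ps. \<exists>u\<in>V. conn V E eps \<phi> (Ps!j) u \<and> \<tau> u \<le> ss!j"
    and I4: "\<forall>j<Suc N. \<forall>v\<in>V. \<forall>h. \<exists>d. (rq ((ts!j) v) h \<longlongrightarrow> d) (at_right 0) \<and> Good Ps ss \<tau> eps E v d"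
    using I by auto
  define cc where "cc = (\<lambda>v. (tau' V E \<tau> v (1 + maxnbr_r V E eps \<phi> v))\<^sup>2)"
  define D where "D = (\<lambda>k. rderiv (alg_tau V E \<tau> eps \<phi> k (alg_P V E \<tau> eps \<phi> k)) (\<phi> (alg_P V E \<tau> eps \<phi> k)))"
  have PD: "alg_P V E \<tau> eps \<phi> k = Ps!(k-1)" "alg_tau V E \<tau> eps \<phi> k = ts!(k-1)" for k
    unfolding alg_P_def alg_tau_def using A N_def by auto
  have Dk: "\<bar>D k\<bar> \<le> 1/2 \<and> (D k)\<^sup>2 \<le> cc (Ps!(k-1)) / eps\<^sup>2" if "k \<in> {1..N}" for k
  proof -
    have j: "k - 1 < N" using that by auto
    hence vV: "Ps!(k-1) \<in> V" using sP lP by auto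
    obtain d where d: "(rq ((ts!(k-1)) (Ps!(k-1))) (\<phi> (Ps!(k-1))) \<longlongrightarrow> d) (at_right 0)"
      "Good Ps ss \<tau> eps E (Ps!(k-1)) d"
      using I4 j vV by (meson less_SucI)
    have "D k = d" unfolding D_def PD using rderiv_eq[OF d(1)] .
    moreover have "d\<^sup>2 \<le> cc (Ps!(k-1)) / eps\<^sup>2" unfolding cc_def
      by (rule d_bound[OF G C e(1) vV d(2) I3])
    ultimately show ?thesis using d(2) unfolding Good_def by auto
  qed
  have JJ: "Jplus V E \<tau> eps \<phi> * Jminus V E \<tau> eps \<phi> = (\<Prod>k=1..N. 1 - (D k)\<^sup>2)"
    unfolding Jplus_def Jminus_def D_def[symmetric] N_def[symmetric] prod.distrib[symmetric]
    by (rule prod.cong) (auto simp: algebra_simps power2_eq_square D_def)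
  have "(\<Prod>k=1..N. exp (-2 * (cc (Ps!(k-1)) / eps\<^sup>2))) \<le> (\<Prod>k=1..N. 1 - (D k)\<^sup>2)"
  proof (rule prod_mono)
    fix k assume k: "k \<in> {1..N}"
    have "(D k)\<^sup>2 \<le> 1/4" 
    proof -
      have "\<bar>D k\<bar>\<^sup>2 \<le> (1/2)\<^sup>2" using Dk[OF k] by (intro power_mono) auto
      thus ?thesis by (simp add: power2_eq_square)
    qed
    hence a: "exp (-2 * (D k)\<^sup>2) \<le> 1 - (D k)\<^sup>2" by (intro exp_ineq) auto
    have b: "exp (-2 * (cc (Ps!(k-1)) / eps\<^sup>2)) \<le> exp (-2 * (D k)\<^sup>2)" using Dk[OF k] by simp
    from order_trans[OF b a] show "0 \<le> exp (-2 * (cc (Ps!(k-1)) / eps\<^sup>2)) \<and> exp (-2 * (cc (Ps!(k-1)) / eps\<^sup>2)) \<le> 1 - (D k)\<^sup>2"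
      by simp
  qed
  moreover have "(\<Prod>k=1..N. exp (-2 * (cc (Ps!(k-1)) / eps\<^sup>2))) = exp (-2 * ((1/eps\<^sup>2) * (\<Sum>v\<in>V. cc v)))"
  proof -
    have "card (set Ps) = card V" using distinct_card[OF dP] lP unfolding N_def by simp
    hence "set Ps = V" using card_subset_eq[OF finV[OF G C] sP] by simp
    hence eq: "(\<Sum>k=1..N. cc (Ps!(k-1))) = (\<Sum>v\<in>V. cc v)" using sum_nth_distinct[OF dP lP] by simp
    have "(\<Sum>k=1..N. -2 * (cc (Ps!(k-1)) / eps\<^sup>2)) = (\<Sum>k=1..N. (-2/eps\<^sup>2) * cc (Ps!(k-1)))"
      by (rule sum.cong) auto
    also have "\<dots> = (-2/eps\<^sup>2) * (\<Sum>k=1..N. cc (Ps!(k-1)))" by (rule sum_distrib_left[symmetric])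
    also have "\<dots> = -2 * ((1/eps\<^sup>2) * (\<Sum>v\<in>V. cc v))" unfolding eq by simp
    finally have "(\<Sum>k=1..N. -2 * (cc (Ps!(k-1)) / eps\<^sup>2)) = -2 * ((1/eps\<^sup>2) * (\<Sum>v\<in>V. cc v))" .
    thus ?thesis by (simp add: exp_sum[symmetric])
  qed
  ultimately have JJb: "exp (-2 * ((1/eps\<^sup>2) * (\<Sum>v\<in>V. cc v))) \<le> Jplus V E \<tau> eps \<phi> * Jminus V E \<tau> eps \<phi>"
    using JJ by simp
  define Y where "Y = (1/eps\<^sup>2) * (\<Sum>v\<in>V. cc v)"
  have "exp (-2 * Y) = (exp (- Y))\<^sup>2" by (simp add: power2_eq_square exp_add[symmetric])
  hence "sqrt (exp (-2 * Y)) = exp (- Y)" by simp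
  hence "exp (- Y) \<le> sqrt (Jplus V E \<tau> eps \<phi> * Jminus V E \<tau> eps \<phi>)"
    using JJb real_sqrt_le_mono unfolding Y_def by metis
  thus ?thesis unfolding Y_def cc_def by simp
qed

end
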